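(* Let $\beta\in\mathbb{N}^n$. The linear operators on $\mathbb{C}[z_1,\ldots,z_n]$ defined by $z^\alpha\mapsto J(\alpha,\beta)z^\alpha$ ($\alpha\in\mathbb{N}^n$) and by $z^\alpha\mapsto(\beta)_\alpha z^\alpha$ ($\alpha\in\mathbb{N}^n$) preserve stability.
   Context: $H=\{z\in\mathbb{C}:\Im(z)>0\}$; a polynomial is stable if it is non-zero whenever all variables lie in $H$; a linear operator preserves stability if it maps each stable polynomial to a stable polynomial or to $0$. $(\beta)_\alpha=\beta!/(\beta-\alpha)!=\prod_i\beta_i!/(\beta_i-\alpha_i)!$ if $\alpha_i\le\beta_i$ for all $i$, and $0$ otherwise. $J(\alpha,\beta)=(\beta)_\alpha\beta^{-\alpha}$ with $\beta^{-\alpha}=\prod_i\beta_i^{-\alpha_i}$, using the convention $k^{\pm k}=1$ for $k=0$. *)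

theory Defs
  imports Complex_Main
begin

text \<open>Polynomials in the variables z_i, i ranging over a finite index type 'n
  (so n = CARD('n)), with complex coefficients, are represented by their
  coefficient functions: p :: ('n \<Rightarrow> nat) \<Rightarrow> complex with finite support;
  p alpha is the coefficient of the monomial z^alpha.\<close>

definition is_mpoly :: "(('n::finite \<Rightarrow> nat) \<Rightarrow> complex) \<Rightarrow> bool" where
  "is_mpoly p \<longleftrightarrow> finite {\<alpha>. p \<alpha> \<noteq> 0}"

definition mpoly_eval :: "(('n::finite \<Rightarrow> nat) \<Rightarrow> complex) \<Rightarrow> ('n \<Rightarrow> complex) \<Rightarrow> complex" where
  "mpoly_eval p z = (\<Sum>\<alpha>\<in>{\<alpha>. p \<alpha> \<noteq> 0}. p \<alpha> * (\<Prod>i\<in>UNIV. z i ^ \<alpha> i))"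

definition stable :: "(('n::finite \<Rightarrow> nat) \<Rightarrow> complex) \<Rightarrow> bool" where
  "stable p \<longleftrightarrow> (\<forall>z. (\<forall>i. Im (z i) > 0) \<longrightarrow> mpoly_eval p z \<noteq> 0)"

definition preserves_stability ::
  "((('n::finite \<Rightarrow> nat) \<Rightarrow> complex) \<Rightarrow> (('n \<Rightarrow> nat) \<Rightarrow> complex)) \<Rightarrow> bool" where
  "preserves_stability T \<longleftrightarrow>
     (\<forall>p. is_mpoly p \<and> stable p \<longrightarrow> stable (T p) \<or> T p = (\<lambda>_. 0))"

definition diag_op :: "(('n \<Rightarrow> nat) \<Rightarrow> complex) \<Rightarrow> (('n \<Rightarrow> nat) \<Rightarrow> complex) \<Rightarrow> (('n \<Rightarrow> nat) \<Rightarrow> complex)" where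
  "diag_op c p = (\<lambda>\<alpha>. c \<alpha> * p \<alpha>)"

definition falling_multi :: "('n::finite \<Rightarrow> nat) \<Rightarrow> ('n \<Rightarrow> nat) \<Rightarrow> real" where
  "falling_multi \<beta> \<alpha> =
     (if \<forall>i. \<alpha> i \<le> \<beta> i then (\<Prod>i\<in>UNIV. fact (\<beta> i) / fact (\<beta> i - \<alpha> i)) else 0)"

definition J :: "('n::finite \<Rightarrow> nat) \<Rightarrow> ('n \<Rightarrow> nat) \<Rightarrow> real" where
  "J \<alpha> \<beta> = falling_multi \<beta> \<alpha> * (\<Prod>i\<in>UNIV. inverse (real (\<beta> i) ^ \<alpha> i))"

end

theory Submission
  imports Defs "HOL-Complex_Analysis.Complex_Analysis" "HOL-Computational_Algebra.Fundamental_Theorem_Algebra"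
begin

definition ff :: "nat \<Rightarrow> nat \<Rightarrow> complex" where
  "ff b k = (\<Prod>j<k. (of_nat b - of_nat j))"

lemma ff_0 [simp]: "ff b 0 = 1" by (simp add: ff_def)

lemma ff_Suc_Suc: "ff (Suc b) (Suc k) = of_nat (Suc b) * ff b k"
  unfolding ff_def by (subst prod.lessThan_Suc_shift) simp

lemma ff_Suc: "ff b (Suc k) = ff b k * (of_nat b - of_nat k)"
  unfolding ff_def by simp

lemma ff_pascal: "ff (Suc b) (Suc k) = ff b (Suc k) + of_nat (Suc k) * ff b k"
  by (subst ff_Suc_Suc, subst ff_Suc) (simp add: algebra_simps)

lemma ff_zero: "k > b \<Longrightarrow> ff b k = 0"
  unfolding ff_def by (rule prod_zero) auto

lemma ff_0_Suc [simp]: "ff 0 (Suc k) = 0" by (simp add: ff_zero)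

lemma ff_fact: "k \<le> b \<Longrightarrow> ff b k = fact b / fact (b - k)"
proof (induction k)
  case 0 then show ?case by simp
next
  case (Suc k)
  have e: "b - k = Suc (b - Suc k)" using Suc.prems by simp
  have A: "fact (b - k) = (of_nat (b - k) :: complex) * fact (b - Suc k)"
    by (simp only: e fact_Suc)
  have B: "(of_nat (b - k) :: complex) = of_nat b - of_nat k" using Suc.prems by (simp add: of_nat_diff)
  have C: "(of_nat b - of_nat k :: complex) \<noteq> 0" using Suc.prems by simp
  have "ff b (Suc k) = fact b / fact (b - k) * (of_nat b - of_nat k)" using Suc by (simp add: ff_Suc)
  also have "\<dots> = fact b / fact (b - Suc k)" using C by (simp add: A B)
  finally show ?case .
qed

definition Lop :: "complex \<Rightarrow> complex poly \<Rightarrow> complex poly" where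
  "Lop y G = G + smult y (pderiv G)"

lemma claimA: "poly ((Lop y ^^ b) G) 0 = (\<Sum>k\<le>b. ff b k * coeff G k * y ^ k)"
proof (induction b arbitrary: G)
  case 0 then show ?case by (simp add: poly_0_coeff_0)
next
  case (Suc b)
  have "poly ((Lop y ^^ Suc b) G) 0 = poly ((Lop y ^^ b) (Lop y G)) 0"
    by (simp add: funpow_Suc_right del: funpow.simps)
  also have "\<dots> = (\<Sum>k\<le>b. ff b k * coeff (Lop y G) k * y ^ k)" by (rule Suc.IH)
  also have "\<dots> = (\<Sum>k\<le>b. ff b k * coeff G k * y ^ k) +
      (\<Sum>k\<le>b. of_nat (Suc k) * ff b k * coeff G (Suc k) * y ^ Suc k)"
    by (simp add: Lop_def coeff_pderiv algebra_simps sum.distrib)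
  also have "(\<Sum>k\<le>b. ff b k * coeff G k * y ^ k) = (\<Sum>k\<le>Suc b. ff b k * coeff G k * y ^ k)"
    by (simp add: ff_zero)
  also have "\<dots> = coeff G 0 + (\<Sum>k\<le>b. ff b (Suc k) * coeff G (Suc k) * y ^ Suc k)"
    by (subst sum.atMost_Suc_shift) simp
  also have "coeff G 0 + (\<Sum>k\<le>b. ff b (Suc k) * coeff G (Suc k) * y ^ Suc k) +
      (\<Sum>k\<le>b. of_nat (Suc k) * ff b k * coeff G (Suc k) * y ^ Suc k)
    = coeff G 0 + (\<Sum>k\<le>b. ff (Suc b) (Suc k) * coeff G (Suc k) * y ^ Suc k)"
    by (simp add: ff_pascal sum.distrib algebra_simps)
  also have "\<dots> = (\<Sum>k\<le>Suc b. ff (Suc b) k * coeff G k * y ^ k)"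
    by (simp only: sum.atMost_Suc_shift) simp
  finally show ?case .
qed

lemma Im_inv_le: assumes "Im w \<ge> 0" shows "Im (1 / w) \<le> 0"
  using assms by (simp add: Im_divide divide_nonpos_pos divide_nonpos_nonneg)

lemma lemW:
  fixes G :: "complex poly"
  assumes "\<forall>x. Im x > 0 \<longrightarrow> poly G x \<noteq> 0" "Im x0 \<ge> 0" "poly G x0 \<noteq> 0"
  shows "Im (poly (pderiv G) x0 / poly G x0) \<le> 0"
  using assms
proof (induction "degree G" arbitrary: G rule: less_induct)
  case less
  show ?case
  proof (cases "degree G = 0")
    case True
    then have "pderiv G = 0" by (simp add: pderiv_eq_0_iff)
    then show ?thesis by simp
  next
    case False
    then have "\<not> constant (poly G)" by (simp add: constant_degree)
    then obtain r where r: "poly G r = 0" using fundamental_theorem_of_algebra by blast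
    then obtain h where h: "G = [:-r, 1:] * h" using poly_eq_0_iff_dvd by (metis dvdE)
    have Imr: "Im r \<le> 0" using less.prems(1) r by (metis not_le)
    have hnz: "h \<noteq> 0" using h False by auto
    have "degree G = degree [:-r, 1:] + degree h" unfolding h by (rule degree_mult_eq) (use hnz in auto)
    then have dh: "degree h < degree G" by simp
    have pG: "\<And>x. poly G x = (x - r) * poly h x" by (simp add: h algebra_simps)
    have hH: "\<forall>x. Im x > 0 \<longrightarrow> poly h x \<noteq> 0" using less.prems(1) pG by auto
    have hx0: "poly h x0 \<noteq> 0" and xr: "x0 - r \<noteq> 0" using less.prems(3) pG by auto
    have IH: "Im (poly (pderiv h) x0 / poly h x0) \<le> 0"
      using less.hyps[OF dh hH less.prems(2) hx0] .
    have dG: "poly (pderiv G) x0 = poly h x0 + (x0 - r) * poly (pderiv h) x0"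
      by (simp add: h pderiv_mult pderiv_pCons pderiv_diff pderiv_smult algebra_simps)
    have "poly (pderiv G) x0 / poly G x0 = 1 / (x0 - r) + poly (pderiv h) x0 / poly h x0"
      using hx0 xr by (simp add: dG pG field_simps)
    moreover have "Im (1 / (x0 - r)) \<le> 0" using Imr less.prems(2) by (intro Im_inv_le) simp
    ultimately show ?thesis using IH by simp
  qed
qed

lemma lemV:
  fixes G :: "complex poly"
  assumes "\<forall>x. Im x > 0 \<longrightarrow> poly G x \<noteq> 0" "Im x \<ge> 0" "poly G x \<noteq> 0" "Im y > 0"
  shows "poly (Lop y G) x \<noteq> 0"
proof
  assume 0: "poly (Lop y G) x = 0"
  define \<sigma> where "\<sigma> = poly (pderiv G) x / poly G x"
  have "poly G x * (1 + y * \<sigma>) = 0" using 0 assms(3) by (simp add: Lop_def \<sigma>_def field_simps)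
  then have "1 + y * \<sigma> = 0" using assms(3) by simp
  moreover have yn: "y \<noteq> 0" using assms(4) by auto
  ultimately have "y * \<sigma> = - 1" by (simp add: add_eq_0_iff)
  then have "\<sigma> * y = - 1" by (simp add: mult.commute)
  then have "\<sigma> = - 1 / y" using yn by (metis minus_divide_left nonzero_mult_div_cancel_right)
  moreover have "Re y * Re y + Im y * Im y > 0" using assms(4) by (simp add: add_nonneg_pos)
  then have "Im (- 1 / y) > 0" using assms(4)
    by (simp add: Im_divide divide_pos_pos power2_eq_square)
  moreover have "Im \<sigma> \<le> 0" unfolding \<sigma>_def using lemW assms by blast
  ultimately show False by simp
qed

lemma iter_nz:
  fixes G :: "complex poly"
  assumes "\<forall>x. Im x > 0 \<longrightarrow> poly G x \<noteq> 0" "poly G 0 \<noteq> 0" "Im y > 0"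
  shows "poly ((Lop y ^^ b) G) 0 \<noteq> 0"
proof -
  have "(\<forall>x. Im x > 0 \<longrightarrow> poly ((Lop y ^^ b) G) x \<noteq> 0) \<and> poly ((Lop y ^^ b) G) 0 \<noteq> 0"
  proof (induction b)
    case 0 then show ?case using assms by simp
  next
    case (Suc b)
    then show ?case using lemV[of "(Lop y ^^ b) G" _ y] assms(3) by (auto simp: less_imp_le)
  qed
  then show ?thesis by blast
qed



definition mon :: "('n::finite \<Rightarrow> complex) \<Rightarrow> ('n \<Rightarrow> nat) \<Rightarrow> complex" where
  "mon z \<alpha> = (\<Prod>j\<in>UNIV. z j ^ \<alpha> j)"

definition Pz :: "('n::finite \<Rightarrow> complex) \<Rightarrow> 'n \<Rightarrow> ('n \<Rightarrow> nat) \<Rightarrow> complex" where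
  "Pz z i \<alpha> = (\<Prod>j\<in>UNIV-{i}. z j ^ \<alpha> j)"

lemma eval_super:
  assumes "finite S" "{\<alpha>. q \<alpha> \<noteq> 0} \<subseteq> S"
  shows "mpoly_eval q z = (\<Sum>\<alpha>\<in>S. q \<alpha> * mon z \<alpha>)"
  unfolding mpoly_eval_def mon_def using assms by (intro sum.mono_neutral_left) auto

lemma mon_split: "mon z \<alpha> = z i ^ \<alpha> i * Pz z i \<alpha>"
  unfolding mon_def Pz_def by (subst prod.remove[of UNIV i]) auto

lemma Pz_upd [simp]: "Pz (z(i:=x)) i \<alpha> = Pz z i \<alpha>"
  unfolding Pz_def by (intro prod.cong) auto

lemma mon_upd: "mon (z(i:=x)) \<alpha> = x ^ \<alpha> i * Pz z i \<alpha>"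
  by (subst mon_split[of _ _ i]) simp

definition gpoly :: "(('n::finite \<Rightarrow> nat) \<Rightarrow> complex) \<Rightarrow> ('n \<Rightarrow> complex) \<Rightarrow> 'n \<Rightarrow> complex poly" where
  "gpoly q z i = (\<Sum>\<alpha>\<in>{\<alpha>. q \<alpha> \<noteq> 0}. monom (q \<alpha> * Pz z i \<alpha>) (\<alpha> i))"

lemma poly_gpoly: "poly (gpoly q z i) x = mpoly_eval q (z(i:=x))"
proof -
  have "poly (gpoly q z i) x = (\<Sum>\<alpha>\<in>{\<alpha>. q \<alpha> \<noteq> 0}. q \<alpha> * (x ^ \<alpha> i * Pz z i \<alpha>))"
    unfolding gpoly_def by (simp add: poly_sum poly_monom algebra_simps)
  also have "\<dots> = (\<Sum>\<alpha>\<in>{\<alpha>. q \<alpha> \<noteq> 0}. q \<alpha> * mon (z(i:=x)) \<alpha>)"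
    by (simp only: mon_upd)
  finally show ?thesis unfolding mpoly_eval_def mon_def .
qed

lemma coeff_gpoly: "coeff (gpoly q z i) k = (\<Sum>\<alpha>\<in>{\<alpha>. q \<alpha> \<noteq> 0}. if \<alpha> i = k then q \<alpha> * Pz z i \<alpha> else 0)"
  unfolding gpoly_def by (simp add: coeff_sum coeff_monom)

definition slice :: "'n \<Rightarrow> nat \<Rightarrow> (('n::finite \<Rightarrow> nat) \<Rightarrow> complex) \<Rightarrow> (('n \<Rightarrow> nat) \<Rightarrow> complex)" where
  "slice i k q = (\<lambda>\<alpha>. if \<alpha> i = k then q \<alpha> else 0)"

lemma is_mpoly_slice: "is_mpoly q \<Longrightarrow> is_mpoly (slice i k q)"
  unfolding is_mpoly_def slice_def by (rule finite_subset[of _ "{\<alpha>. q \<alpha> \<noteq> 0}"]) auto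

lemma eval_slice:
  assumes "is_mpoly q"
  shows "mpoly_eval (slice i k q) z = z i ^ k * coeff (gpoly q z i) k"
proof -
  have "mpoly_eval (slice i k q) z = (\<Sum>\<alpha>\<in>{\<alpha>. q \<alpha> \<noteq> 0}. slice i k q \<alpha> * mon z \<alpha>)"
    using assms unfolding is_mpoly_def by (intro eval_super) (auto simp: slice_def)
  also have "\<dots> = (\<Sum>\<alpha>\<in>{\<alpha>. q \<alpha> \<noteq> 0}. z i ^ k * (if \<alpha> i = k then q \<alpha> * Pz z i \<alpha> else 0))"
    by (intro sum.cong refl) (auto simp: slice_def mon_split[of z _ i])
  finally show ?thesis by (simp add: coeff_gpoly sum_distrib_left)
qed

lemma is_mpoly_diag: "is_mpoly q \<Longrightarrow> is_mpoly (diag_op c q)"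
  unfolding is_mpoly_def diag_op_def by (rule finite_subset[of _ "{\<alpha>. q \<alpha> \<noteq> 0}"]) auto

lemma claimB:
  assumes "is_mpoly q"
  shows "mpoly_eval (diag_op (\<lambda>\<alpha>. ff b (\<alpha> i)) q) z = (\<Sum>k\<le>b. ff b k * coeff (gpoly q z i) k * z i ^ k)"
proof -
  let ?S = "{\<alpha>. q \<alpha> \<noteq> 0}"
  have fin: "finite ?S" using assms unfolding is_mpoly_def .
  have "mpoly_eval (diag_op (\<lambda>\<alpha>. ff b (\<alpha> i)) q) z = (\<Sum>\<alpha>\<in>?S. ff b (\<alpha> i) * q \<alpha> * mon z \<alpha>)"
    using fin by (subst eval_super[of ?S]) (auto simp: diag_op_def)
  also have "\<dots> = (\<Sum>\<alpha>\<in>?S. \<Sum>k\<le>b. if \<alpha> i = k then ff b k * (q \<alpha> * Pz z i \<alpha>) * z i ^ k else 0)"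
  proof (intro sum.cong refl)
    fix \<alpha> assume "\<alpha> \<in> ?S"
    show "ff b (\<alpha> i) * q \<alpha> * mon z \<alpha> = (\<Sum>k\<le>b. if \<alpha> i = k then ff b k * (q \<alpha> * Pz z i \<alpha>) * z i ^ k else 0)"
      by (cases "\<alpha> i \<le> b") (auto simp: sum.delta ff_zero mon_split[of z _ i] algebra_simps)
  qed
  also have "\<dots> = (\<Sum>k\<le>b. \<Sum>\<alpha>\<in>?S. if \<alpha> i = k then ff b k * (q \<alpha> * Pz z i \<alpha>) * z i ^ k else 0)"
    by (rule sum.swap)
  also have "\<dots> = (\<Sum>k\<le>b. ff b k * coeff (gpoly q z i) k * z i ^ k)"
    unfolding coeff_gpoly sum_distrib_left sum_distrib_right
    by (intro sum.cong refl) auto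
  finally show ?thesis .
qed



abbreviation Hn :: "('n::finite \<Rightarrow> complex) \<Rightarrow> bool" where
  "Hn z \<equiv> (\<forall>j. Im (z j) > 0)"

lemma H_infinite: "infinite {x::complex. Im x > 0}"
proof
  assume "finite {x::complex. Im x > 0}"
  moreover have "range (\<lambda>n::nat. of_nat n + \<i>) \<subseteq> {x::complex. Im x > 0}" by auto
  ultimately have "finite (range (\<lambda>n::nat. of_nat n + \<i>))" by (rule finite_subset[rotated])
  moreover have "inj (\<lambda>n::nat. of_nat n + (\<i>::complex))" by (auto simp: inj_on_def)
  ultimately show False using range_inj_infinite by blast
qed

lemma slice_zero:
  assumes "is_mpoly q" "\<forall>z. Hn z \<longrightarrow> mpoly_eval q z = 0" "Hn (z::'n::finite \<Rightarrow> complex)"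
  shows "mpoly_eval (slice i k q) z = 0"
proof -
  have "\<forall>x. Im x > 0 \<longrightarrow> poly (gpoly q z i) x = 0"
    using assms(2,3) by (auto simp: poly_gpoly)
  then have "{x. Im x > 0} \<subseteq> {x. poly (gpoly q z i) x = 0}" by auto
  then have "gpoly q z i = 0" using poly_roots_finite H_infinite finite_subset by blast
  then show ?thesis using assms(1) by (simp add: eval_slice)
qed

lemma coef_zero:
  assumes "is_mpoly q" "\<forall>z. Hn z \<longrightarrow> mpoly_eval q z = 0"
  shows "q = (\<lambda>_. 0)"
proof
  fix \<alpha>0 :: "'a::finite \<Rightarrow> nat"
  define Q where "Q I = (\<lambda>\<alpha>. if \<forall>j\<in>I. \<alpha> j = \<alpha>0 j then q \<alpha> else 0)" for I
  have "finite I \<Longrightarrow> is_mpoly (Q I) \<and> (\<forall>z. Hn z \<longrightarrow> mpoly_eval (Q I) z = 0)" for I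
  proof (induction I rule: finite_induct)
    case empty
    have "Q {} = q" by (simp add: Q_def)
    then show ?case using assms by simp
  next
    case (insert j I)
    have e: "Q (insert j I) = slice j (\<alpha>0 j) (Q I)"
      by (auto simp: Q_def slice_def)
    show ?case unfolding e using insert.IH
      by (auto intro: is_mpoly_slice slice_zero)
  qed
  from this[of UNIV] have h: "is_mpoly (Q UNIV)" "\<And>z. Hn z \<Longrightarrow> mpoly_eval (Q UNIV) z = 0" by auto
  have QU: "Q UNIV = (\<lambda>\<alpha>. if \<alpha> = \<alpha>0 then q \<alpha> else 0)" by (auto simp: Q_def fun_eq_iff)
  have "mpoly_eval (Q UNIV) (\<lambda>_. \<i>) = q \<alpha>0 * mon (\<lambda>_. \<i>) \<alpha>0"
    unfolding QU by (subst eval_super[of "{\<alpha>0}"]) auto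
  moreover have "mon (\<lambda>_. \<i>) \<alpha>0 \<noteq> 0" by (simp add: mon_def)
  ultimately show "q \<alpha>0 = 0" using h(2)[of "\<lambda>_. \<i>"] by simp
qed

definition mulx :: "'n \<Rightarrow> (('n::finite \<Rightarrow> nat) \<Rightarrow> complex) \<Rightarrow> (('n \<Rightarrow> nat) \<Rightarrow> complex)" where
  "mulx i r = (\<lambda>\<alpha>. if \<alpha> i = 0 then 0 else r (\<alpha>(i := \<alpha> i - 1)))"

definition sh :: "'n \<Rightarrow> (('n::finite \<Rightarrow> nat) \<Rightarrow> complex) \<Rightarrow> (('n \<Rightarrow> nat) \<Rightarrow> complex)" where
  "sh i q = (\<lambda>\<alpha>. q (\<alpha>(i := Suc (\<alpha> i))))"

lemma is_mpoly_sh: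
  assumes "is_mpoly q" shows "is_mpoly (sh i q)"
proof -
  have "{\<alpha>. sh i q \<alpha> \<noteq> 0} \<subseteq> (\<lambda>\<alpha>. \<alpha>(i := \<alpha> i - 1)) ` {\<alpha>. q \<alpha> \<noteq> 0}"
  proof
    fix \<alpha> assume "\<alpha> \<in> {\<alpha>. sh i q \<alpha> \<noteq> 0}"
    then have "\<alpha>(i := Suc (\<alpha> i)) \<in> {\<alpha>. q \<alpha> \<noteq> 0}" by (simp add: sh_def)
    moreover have "\<alpha> = (\<alpha>(i := Suc (\<alpha> i)))(i := (\<alpha>(i := Suc (\<alpha> i))) i - 1)" by simp
    ultimately show "\<alpha> \<in> (\<lambda>\<alpha>. \<alpha>(i := \<alpha> i - 1)) ` {\<alpha>. q \<alpha> \<noteq> 0}" by blast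
  qed
  then show ?thesis using assms unfolding is_mpoly_def by (meson finite_imageI finite_subset)
qed

lemma eval_mulx:
  assumes "is_mpoly r"
  shows "mpoly_eval (mulx i r) z = z i * mpoly_eval r z"
proof -
  let ?S = "{\<alpha>. r \<alpha> \<noteq> 0}"
  define f where "f = (\<lambda>\<alpha>::'a \<Rightarrow> nat. \<alpha>(i := Suc (\<alpha> i)))"
  have fin: "finite ?S" using assms by (simp add: is_mpoly_def)
  have sub: "{\<alpha>. mulx i r \<alpha> \<noteq> 0} \<subseteq> f ` ?S"
  proof
    fix \<alpha> assume a: "\<alpha> \<in> {\<alpha>. mulx i r \<alpha> \<noteq> 0}"
    then have "\<alpha> i \<noteq> 0" "r (\<alpha>(i := \<alpha> i - 1)) \<noteq> 0" by (auto simp: mulx_def split: if_splits)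
    moreover have "\<alpha> = f (\<alpha>(i := \<alpha> i - 1))" using \<open>\<alpha> i \<noteq> 0\<close> by (auto simp: f_def fun_eq_iff)
    ultimately show "\<alpha> \<in> f ` ?S" by blast
  qed
  have inj: "inj_on f ?S"
  proof
    fix x y assume "f x = f y"
    then have "\<forall>j. (f x) j = (f y) j" by simp
    then show "x = y" by (auto simp: f_def fun_eq_iff split: if_splits)
  qed
  have "mpoly_eval (mulx i r) z = (\<Sum>\<alpha>\<in>f ` ?S. mulx i r \<alpha> * mon z \<alpha>)"
    using fin sub by (intro eval_super) auto
  also have "\<dots> = (\<Sum>\<beta>\<in>?S. mulx i r (f \<beta>) * mon z (f \<beta>))"
    using inj by (simp add: sum.reindex)
  also have "\<dots> = (\<Sum>\<beta>\<in>?S. z i * (r \<beta> * mon z \<beta>))"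
  proof (intro sum.cong refl)
    fix \<beta>
    have "mulx i r (f \<beta>) = r \<beta>" by (simp add: mulx_def f_def)
    moreover have "mon z (f \<beta>) = z i * mon z \<beta>"
      using mon_split[of z "f \<beta>" i] mon_split[of z \<beta> i]
      by (simp add: f_def Pz_def)
    ultimately show "mulx i r (f \<beta>) * mon z (f \<beta>) = z i * (r \<beta> * mon z \<beta>)" by simp
  qed
  also have "\<dots> = z i * mpoly_eval r z"
    by (simp add: mpoly_eval_def mon_def sum_distrib_left)
  finally show ?thesis .
qed

lemma mulx_sh: "(\<forall>\<alpha>. \<alpha> i = 0 \<longrightarrow> q \<alpha> = 0) \<Longrightarrow> mulx i (sh i q) = q"
  by (auto simp: mulx_def sh_def fun_eq_iff)

lemma eval_cmul:
  assumes "is_mpoly q"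
  shows "mpoly_eval (\<lambda>\<alpha>. c * q \<alpha>) z = c * mpoly_eval q z"
proof -
  have "mpoly_eval (\<lambda>\<alpha>. c * q \<alpha>) z = (\<Sum>\<alpha>\<in>{\<alpha>. q \<alpha> \<noteq> 0}. c * q \<alpha> * mon z \<alpha>)"
    using assms unfolding is_mpoly_def by (intro eval_super) auto
  then show ?thesis by (simp add: mpoly_eval_def mon_def sum_distrib_left mult.assoc)
qed

lemma eval_scalevar:
  assumes "is_mpoly q"
  shows "mpoly_eval (\<lambda>\<alpha>. c ^ \<alpha> i * q \<alpha>) z = mpoly_eval q (z(i := c * z i))"
proof -
  have "mpoly_eval (\<lambda>\<alpha>. c ^ \<alpha> i * q \<alpha>) z = (\<Sum>\<alpha>\<in>{\<alpha>. q \<alpha> \<noteq> 0}. c ^ \<alpha> i * q \<alpha> * mon z \<alpha>)"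
    using assms unfolding is_mpoly_def by (intro eval_super) auto
  also have "\<dots> = (\<Sum>\<alpha>\<in>{\<alpha>. q \<alpha> \<noteq> 0}. q \<alpha> * mon (z(i := c * z i)) \<alpha>)"
    by (intro sum.cong refl) (simp add: mon_upd mon_split[of z _ i] power_mult_distrib)
  finally show ?thesis by (simp add: mpoly_eval_def mon_def)
qed



lemma unif_lim:
  fixes f :: "complex \<Rightarrow> complex \<Rightarrow> complex"
  assumes cont: "continuous_on UNIV (\<lambda>p. f (fst p) (snd p))" and K: "compact K"
  shows "uniform_limit K (\<lambda>n t. f (\<i> / of_nat (Suc n)) t) (\<lambda>t. f 0 t) sequentially"
proof -
  let ?C = "cball (0::complex) 1 \<times> K"
  have "uniformly_continuous_on ?C (\<lambda>p. f (fst p) (snd p))"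
    using K by (intro compact_uniformly_continuous continuous_on_subset[OF cont]) (auto intro: compact_Times)
  then have uc: "\<forall>e>0. \<exists>d>0. \<forall>x\<in>?C. \<forall>x'\<in>?C. dist x' x < d \<longrightarrow> dist (f (fst x') (snd x')) (f (fst x) (snd x)) < e"
    unfolding uniformly_continuous_on_def .
  have "(\<lambda>n. of_real (inverse (real (Suc n))) :: complex) \<longlonglongrightarrow> of_real 0"
    by (intro tendsto_of_real LIMSEQ_inverse_real_of_nat)
  then have "(\<lambda>n. \<i> * of_real (inverse (real (Suc n))) :: complex) \<longlonglongrightarrow> \<i> * 0"
    by (intro tendsto_mult tendsto_const) simp
  then have lim: "(\<lambda>n. \<i> / of_nat (Suc n) :: complex) \<longlonglongrightarrow> 0"
    by (simp add: divide_inverse of_real_inverse)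
  show ?thesis
    unfolding uniform_limit_iff
  proof (intro allI impI)
    fix e :: real assume "e > 0"
    then obtain d where d: "d > 0" and dd: "\<forall>x\<in>?C. \<forall>x'\<in>?C. dist x' x < d \<longrightarrow> dist (f (fst x') (snd x')) (f (fst x) (snd x)) < e"
      using uc by blast
    have "\<forall>\<^sub>F n in sequentially. dist (\<i> / of_nat (Suc n)) 0 < min d 1"
      using lim d by (intro tendstoD) auto
    then show "\<forall>\<^sub>F n in sequentially. \<forall>t\<in>K. dist (f (\<i> / of_nat (Suc n)) t) (f 0 t) < e"
    proof eventually_elim
      case (elim n)
      show ?case
      proof
        fix t assume t: "t \<in> K"
        let ?s = "\<i> / of_nat (Suc n) :: complex"
        have "(?s, t) \<in> ?C" "(0, t) \<in> ?C" using elim t by (auto simp: dist_norm)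
        moreover have "dist (?s, t) (0, t) < d" using elim by (simp add: dist_Pair_Pair)
        ultimately show "dist (f ?s t) (f 0 t) < e" using dd by fastforce
      qed
    qed
  qed
qed

lemma lemR:
  fixes q :: "('n::finite \<Rightarrow> nat) \<Rightarrow> complex"
  assumes "is_mpoly q" "stable q" "Hn z0" "mpoly_eval q (z0(i:=0)) = 0" "Hn z1"
  shows "mpoly_eval q (z1(i:=0)) = 0"
proof -
  define a where "a = (\<lambda>j. if j = i then 0 else z0 j)"
  define bb where "bb = (\<lambda>j. if j = i then 0 else z1 j - z0 j)"
  define d where "d = (\<lambda>j. if j = i then 1 else (0::complex))"
  define \<Phi> where "\<Phi> s t = mpoly_eval q (\<lambda>j. a j + t * bb j + s * d j)" for s t
  define S where "S = (\<Inter>j. {t. 0 < Im (z0 j + t * (z1 j - z0 j))})"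
  define F where "F n t = \<Phi> (\<i> / of_nat (Suc n)) t" for n t
  define g where "g t = \<Phi> 0 t" for t
  have openS: "open S" unfolding S_def
    by (intro open_INT ballI open_Collect_less continuous_intros) auto
  have convS: "convex S"
    unfolding convex_def
  proof (intro ballI allI impI)
    fix x y :: complex and u v :: real
    assume xy: "x \<in> S" "y \<in> S" and uv: "0 \<le> u" "0 \<le> v" "u + v = 1"
    show "u *\<^sub>R x + v *\<^sub>R y \<in> S" unfolding S_def
    proof (intro InterI, safe)
      fix j
      let ?A = "Im (z0 j + x * (z1 j - z0 j))" and ?B = "Im (z0 j + y * (z1 j - z0 j))"
      have A: "?A > 0" and B: "?B > 0" using xy by (auto simp: S_def)
      have "z0 j + (u *\<^sub>R x + v *\<^sub>R y) * (z1 j - z0 j)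
          = of_real u * (z0 j + x * (z1 j - z0 j)) + of_real v * (z0 j + y * (z1 j - z0 j))"
        using uv(3) by (simp add: scaleR_conv_of_real algebra_simps)
          (metis (no_types) add.commute add_diff_cancel_left' distrib_left mult.commute mult.left_neutral of_real_add of_real_1)
      then have e: "Im (z0 j + (u *\<^sub>R x + v *\<^sub>R y) * (z1 j - z0 j)) = u * ?A + v * ?B"
        by simp
      have "u * ?A + v * ?B > 0"
      proof (cases "u = 0")
        case True then show ?thesis using uv B by simp
      next
        case False then show ?thesis using uv A B
          by (intro add_pos_nonneg mult_pos_pos mult_nonneg_nonneg) auto
      qed
      then show "0 < Im (z0 j + (u *\<^sub>R x + v *\<^sub>R y) * (z1 j - z0 j))" using e by simp
    qed
  qed
  have connS: "connected S" using convS by (rule convex_connected)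
  have pt: "(\<lambda>j. a j + t * bb j + s * d j) = (\<lambda>j. if j = i then s else z0 j + t * (z1 j - z0 j))" for s t
    by (auto simp: a_def bb_def d_def fun_eq_iff)
  have hol: "(\<lambda>t. \<Phi> s t) holomorphic_on S" for s
    unfolding \<Phi>_def mpoly_eval_def by (intro holomorphic_intros)
  have cont: "continuous_on UNIV (\<lambda>p. \<Phi> (fst p) (snd p))"
    unfolding \<Phi>_def mpoly_eval_def by (intro continuous_intros)
  have st: "\<And>z. Hn z \<Longrightarrow> mpoly_eval q z \<noteq> 0" using assms(2) by (simp add: stable_def)
  have nz: "F n t \<noteq> 0" if "t \<in> S" for n t
  proof -
    define w where "w = (\<lambda>j. if j = i then \<i> / of_nat (Suc n) else z0 j + t * (z1 j - z0 j))"
    have "Hn w" using that by (auto simp: S_def w_def)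
    then have "mpoly_eval q w \<noteq> 0" by (rule st)
    then show ?thesis unfolding F_def \<Phi>_def pt w_def .
  qed
  have S0: "0 \<in> S" and S1: "1 \<in> S" using assms(3,5) by (auto simp: S_def)
  have e0: "(\<lambda>j. if j = i then 0 else z0 j + 0 * (z1 j - z0 j)) = z0(i:=0)" by (auto simp: fun_eq_iff)
  have e1: "(\<lambda>j. if j = i then 0 else z0 j + 1 * (z1 j - z0 j)) = z1(i:=0)" by (auto simp: fun_eq_iff)
  have g0: "g 0 = 0" unfolding g_def \<Phi>_def pt e0 using assms(4) .
  have g1: "g 1 = mpoly_eval q (z1(i:=0))" unfolding g_def \<Phi>_def pt e1 ..
  show ?thesis
  proof (cases "g constant_on S")
    case True
    then obtain c where "\<forall>t\<in>S. g t = c" by (auto simp: constant_on_def)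
    then show ?thesis using S0 S1 g0 g1 by auto
  next
    case False
    have "g 0 \<noteq> 0"
    proof (rule Hurwitz_no_zeros[OF openS connS _ _ _ False _ S0])
      show "F n holomorphic_on S" for n unfolding F_def by (rule hol)
      show "g holomorphic_on S" unfolding g_def by (rule hol)
      show "uniform_limit K F g sequentially" if "compact K" "K \<subseteq> S" for K
        unfolding F_def g_def by (rule unif_lim[OF cont that(1)])
      show "F n t \<noteq> 0" if "t \<in> S" for n t using nz that .
    qed
    then show ?thesis using g0 by simp
  qed
qed



lemma per_var_core:
  fixes i :: "'n::finite" and q :: "('n \<Rightarrow> nat) \<Rightarrow> complex"
  assumes mp: "is_mpoly q" and st: "stable q"
    and IH: "\<And>b' q'. b = Suc b' \<Longrightarrow> is_mpoly q' \<Longrightarrow> stable q' \<Longrightarrow>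
          stable (diag_op (\<lambda>\<alpha>. ff b' (\<alpha> i)) q') \<or> diag_op (\<lambda>\<alpha>. ff b' (\<alpha> i)) q' = (\<lambda>_. 0)"
  shows "stable (diag_op (\<lambda>\<alpha>. ff b (\<alpha> i)) q) \<or> diag_op (\<lambda>\<alpha>. ff b (\<alpha> i)) q = (\<lambda>_. 0)"
proof (cases "\<forall>z. Hn z \<longrightarrow> mpoly_eval q (z(i:=0)) \<noteq> 0")
  case True
  have "stable (diag_op (\<lambda>\<alpha>. ff b (\<alpha> i)) q)"
    unfolding stable_def
  proof (intro allI impI)
    fix z :: "'n \<Rightarrow> complex" assume z: "Hn z"
    let ?G = "gpoly q z i"
    have "\<forall>x. Im x > 0 \<longrightarrow> poly ?G x \<noteq> 0"
      using st z by (auto simp: poly_gpoly stable_def)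
    moreover have "poly ?G 0 \<noteq> 0" using True z by (simp add: poly_gpoly)
    ultimately have "poly ((Lop (z i) ^^ b) ?G) 0 \<noteq> 0" using z by (intro iter_nz) auto
    then show "mpoly_eval (diag_op (\<lambda>\<alpha>. ff b (\<alpha> i)) q) z \<noteq> 0"
      by (simp add: claimA claimB[OF mp] mult.assoc)
  qed
  then show ?thesis ..
next
  case False
  then obtain z0 where z0: "Hn z0" "mpoly_eval q (z0(i:=0)) = 0" by blast
  have allz: "mpoly_eval q (z(i:=0)) = 0" if "Hn z" for z
    using lemR[OF mp st z0 that] .
  have "\<forall>z. Hn z \<longrightarrow> mpoly_eval (slice i 0 q) z = 0"
    using allz by (simp add: eval_slice[OF mp] poly_0_coeff_0[symmetric] poly_gpoly)
  then have "slice i 0 q = (\<lambda>_. 0)" by (intro coef_zero is_mpoly_slice mp)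
  then have q0: "\<forall>\<alpha>. \<alpha> i = 0 \<longrightarrow> q \<alpha> = 0"
    by (metis slice_def)
  show ?thesis
  proof (cases b)
    case 0
    have "diag_op (\<lambda>\<alpha>. ff b (\<alpha> i)) q = (\<lambda>_. 0)"
    proof
      fix \<alpha> :: "'n \<Rightarrow> nat"
      show "diag_op (\<lambda>\<alpha>. ff b (\<alpha> i)) q \<alpha> = 0"
        using q0 0 by (cases "\<alpha> i") (auto simp: diag_op_def)
    qed
    then show ?thesis ..
  next
    case (Suc b')
    have mps: "is_mpoly (sh i q)" using mp by (rule is_mpoly_sh)
    have sts: "stable (sh i q)" unfolding stable_def
    proof (intro allI impI)
      fix z :: "'n \<Rightarrow> complex" assume z: "Hn z"
      have "mpoly_eval q z = z i * mpoly_eval (sh i q) z"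
        using eval_mulx[OF mps, of i z] mulx_sh[OF q0] by simp
      moreover have "mpoly_eval q z \<noteq> 0" using st z by (simp add: stable_def)
      ultimately show "mpoly_eval (sh i q) z \<noteq> 0" by auto
    qed
    define r where "r = diag_op (\<lambda>\<alpha>. ff b' (\<alpha> i)) (sh i q)"
    have rr: "stable r \<or> r = (\<lambda>_. 0)" unfolding r_def using IH[OF Suc mps sts] .
    have mpr: "is_mpoly r" unfolding r_def by (intro is_mpoly_diag mps)
    have eq: "diag_op (\<lambda>\<alpha>. ff b (\<alpha> i)) q = mulx i (diag_op (\<lambda>_. of_nat (Suc b')) r)"
    proof
      fix \<alpha> :: "'n \<Rightarrow> nat"
      show "diag_op (\<lambda>\<alpha>. ff b (\<alpha> i)) q \<alpha> = mulx i (diag_op (\<lambda>_. of_nat (Suc b')) r) \<alpha>"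
      proof (cases "\<alpha> i")
        case 0 then show ?thesis using q0 by (simp add: diag_op_def mulx_def)
      next
        case (Suc k)
        have "\<alpha>(i := k, i := Suc k) = \<alpha>" using Suc by (auto simp: fun_eq_iff)
        then show ?thesis using Suc \<open>b = Suc b'\<close>
          by (simp add: diag_op_def mulx_def r_def sh_def ff_Suc_Suc)
      qed
    qed
    from rr show ?thesis
    proof
      assume "r = (\<lambda>_. 0)"
      then have "diag_op (\<lambda>_. of_nat (Suc b')) r = (\<lambda>_. 0)" by (simp add: diag_op_def)
      then have "diag_op (\<lambda>\<alpha>. ff b (\<alpha> i)) q = (\<lambda>_. 0)" unfolding eq by (simp add: mulx_def)
      then show ?thesis ..
    next
      assume sr: "stable r"
      have "stable (diag_op (\<lambda>\<alpha>. ff b (\<alpha> i)) q)" unfolding stable_def eq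
      proof (intro allI impI)
        fix z :: "'n \<Rightarrow> complex" assume z: "Hn z"
        have "mpoly_eval (mulx i (diag_op (\<lambda>_. of_nat (Suc b')) r)) z
            = z i * (of_nat (Suc b') * mpoly_eval r z)"
          using mpr eval_mulx[OF is_mpoly_diag[OF mpr, of "\<lambda>_. of_nat (Suc b')"], of i z]
            eval_cmul[OF mpr, of "of_nat (Suc b')" z]
          by (simp add: diag_op_def)
        moreover have "(of_nat (Suc b') :: complex) \<noteq> 0" by (rule of_nat_neq_0)
        moreover have "z i \<noteq> 0" using z by (metis less_irrefl zero_complex.simps(2))
        moreover have "mpoly_eval r z \<noteq> 0" using sr z by (simp add: stable_def)
        ultimately show "mpoly_eval (mulx i (diag_op (\<lambda>_. of_nat (Suc b')) r)) z \<noteq> 0"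
          by (simp del: of_nat_Suc)
      qed
      then show ?thesis ..
    qed
  qed
qed

lemma per_var:
  fixes i :: "'n::finite"
  shows "preserves_stability (diag_op (\<lambda>\<alpha>::'n \<Rightarrow> nat. ff b (\<alpha> i)))"
proof -
  have "\<forall>q::('n \<Rightarrow> nat) \<Rightarrow> complex. is_mpoly q \<and> stable q \<longrightarrow>
      stable (diag_op (\<lambda>\<alpha>. ff b (\<alpha> i)) q) \<or> diag_op (\<lambda>\<alpha>. ff b (\<alpha> i)) q = (\<lambda>_. 0)"
  proof (induction b)
    case 0 then show ?case using per_var_core by blast
  next
    case (Suc b) then show ?case using per_var_core[of _ "Suc b"] by blast
  qed
  then show ?thesis by (simp add: preserves_stability_def)
qed



lemma per_var_s:
  fixes i :: "'n::finite" and s :: real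
  assumes "s > 0"
  shows "preserves_stability (diag_op (\<lambda>\<alpha>::'n \<Rightarrow> nat. ff b (\<alpha> i) * complex_of_real s ^ \<alpha> i))"
  unfolding preserves_stability_def
proof (intro allI impI)
  fix p :: "('n \<Rightarrow> nat) \<Rightarrow> complex" assume p: "is_mpoly p \<and> stable p"
  define T where "T = diag_op (\<lambda>\<alpha>. ff b (\<alpha> i)) p"
  have T: "stable T \<or> T = (\<lambda>_. 0)" using per_var[of b i] p by (simp add: preserves_stability_def T_def)
  have mT: "is_mpoly T" unfolding T_def using p by (simp add: is_mpoly_diag)
  have eq: "diag_op (\<lambda>\<alpha>. ff b (\<alpha> i) * complex_of_real s ^ \<alpha> i) p = (\<lambda>\<alpha>. complex_of_real s ^ \<alpha> i * T \<alpha>)"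
    by (simp add: T_def diag_op_def fun_eq_iff)
  from T show "stable (diag_op (\<lambda>\<alpha>. ff b (\<alpha> i) * complex_of_real s ^ \<alpha> i) p) \<or>
      diag_op (\<lambda>\<alpha>. ff b (\<alpha> i) * complex_of_real s ^ \<alpha> i) p = (\<lambda>_. 0)"
  proof
    assume "T = (\<lambda>_. 0)" then show ?thesis unfolding eq by simp
  next
    assume sT: "stable T"
    have "stable (\<lambda>\<alpha>. complex_of_real s ^ \<alpha> i * T \<alpha>)" unfolding stable_def
    proof (intro allI impI)
      fix z :: "'n \<Rightarrow> complex" assume z: "Hn z"
      have "Hn (z(i := complex_of_real s * z i))" using z assms by auto
      then have "mpoly_eval T (z(i := complex_of_real s * z i)) \<noteq> 0" using sT by (simp add: stable_def)
      then show "mpoly_eval (\<lambda>\<alpha>. complex_of_real s ^ \<alpha> i * T \<alpha>) z \<noteq> 0"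
        by (simp add: eval_scalevar[OF mT])
    qed
    then show ?thesis unfolding eq ..
  qed
qed

lemma ps_mult:
  assumes c: "preserves_stability (diag_op c)" and d: "preserves_stability (diag_op d)"
  shows "preserves_stability (diag_op (\<lambda>\<alpha>. c \<alpha> * d \<alpha>))"
  unfolding preserves_stability_def
proof (intro allI impI)
  fix p :: "('a \<Rightarrow> nat) \<Rightarrow> complex" assume p: "is_mpoly p \<and> stable p"
  define r where "r = diag_op d p"
  have eq: "diag_op (\<lambda>\<alpha>. c \<alpha> * d \<alpha>) p = diag_op c r" by (simp add: r_def diag_op_def fun_eq_iff)
  have mr: "is_mpoly r" using p by (simp add: r_def is_mpoly_diag)
  have "stable r \<or> r = (\<lambda>_. 0)" using d p by (simp add: preserves_stability_def r_def)
  then show "stable (diag_op (\<lambda>\<alpha>. c \<alpha> * d \<alpha>) p) \<or> diag_op (\<lambda>\<alpha>. c \<alpha> * d \<alpha>) p = (\<lambda>_. 0)"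
  proof
    assume "stable r" then show ?thesis using c mr unfolding eq preserves_stability_def by blast
  next
    assume "r = (\<lambda>_. 0)" then show ?thesis unfolding eq by (simp add: diag_op_def)
  qed
qed

lemma ps_prod:
  fixes m :: "'n::finite \<Rightarrow> nat \<Rightarrow> complex"
  assumes "\<And>i. preserves_stability (diag_op (\<lambda>\<alpha>::'n \<Rightarrow> nat. m i (\<alpha> i)))"
  shows "preserves_stability (diag_op (\<lambda>\<alpha>::'n \<Rightarrow> nat. \<Prod>i\<in>UNIV. m i (\<alpha> i)))"
proof -
  have "finite I \<Longrightarrow> preserves_stability (diag_op (\<lambda>\<alpha>::'n \<Rightarrow> nat. \<Prod>i\<in>I. m i (\<alpha> i)))" for I
  proof (induction I rule: finite_induct)
    case empty
    show ?case by (simp add: preserves_stability_def diag_op_def)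
  next
    case (insert j I)
    have "preserves_stability (diag_op (\<lambda>\<alpha>::'n \<Rightarrow> nat. m j (\<alpha> j) * (\<Prod>i\<in>I. m i (\<alpha> i))))"
      by (rule ps_mult[OF assms insert.IH])
    then show ?case using insert.hyps by simp
  qed
  then show ?thesis by simp
qed

lemma falling_conv:
  "complex_of_real (falling_multi \<beta> \<alpha>) = (\<Prod>i\<in>UNIV. ff (\<beta> i) (\<alpha> i))"
proof (cases "\<forall>i. \<alpha> i \<le> \<beta> i")
  case True
  then show ?thesis
    by (simp add: falling_multi_def ff_fact of_real_prod)
next
  case False
  then obtain i where "\<alpha> i > \<beta> i" by (auto simp: not_le)
  then have "ff (\<beta> i) (\<alpha> i) = 0" by (rule ff_zero)
  then have "(\<Prod>i\<in>UNIV. ff (\<beta> i) (\<alpha> i)) = 0" by (intro prod_zero) auto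
  moreover have "falling_multi \<beta> \<alpha> = 0" using False by (simp add: falling_multi_def)
  ultimately show ?thesis by simp
qed

definition sc :: "nat \<Rightarrow> real" where "sc b = (if b = 0 then 1 else inverse (real b))"

lemma sc_pos: "sc b > 0" by (simp add: sc_def)

lemma J_conv:
  "complex_of_real (J \<alpha> \<beta>) = (\<Prod>i\<in>UNIV. ff (\<beta> i) (\<alpha> i) * complex_of_real (sc (\<beta> i)) ^ \<alpha> i)"
proof -
  have "complex_of_real (J \<alpha> \<beta>) = (\<Prod>i\<in>UNIV. ff (\<beta> i) (\<alpha> i)) *
      (\<Prod>i\<in>UNIV. complex_of_real (inverse (real (\<beta> i) ^ \<alpha> i)))"
    by (simp add: J_def falling_conv of_real_prod)
  also have "\<dots> = (\<Prod>i\<in>UNIV. ff (\<beta> i) (\<alpha> i) * complex_of_real (inverse (real (\<beta> i) ^ \<alpha> i)))"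
    by (simp add: prod.distrib)
  also have "\<dots> = (\<Prod>i\<in>UNIV. ff (\<beta> i) (\<alpha> i) * complex_of_real (sc (\<beta> i)) ^ \<alpha> i)"
  proof (intro prod.cong refl)
    fix i
    show "ff (\<beta> i) (\<alpha> i) * complex_of_real (inverse (real (\<beta> i) ^ \<alpha> i)) =
        ff (\<beta> i) (\<alpha> i) * complex_of_real (sc (\<beta> i)) ^ \<alpha> i"
    proof (cases "\<beta> i = 0")
      case True
      then show ?thesis by (cases "\<alpha> i") (auto simp: sc_def)
    next
      case False
      then show ?thesis by (simp add: sc_def power_inverse of_real_power)
    qed
  qed
  finally show ?thesis .
qed

theorem lemma5p2:
  fixes \<beta> :: "'n::finite \<Rightarrow> nat"
  shows "preserves_stability (diag_op (\<lambda>\<alpha>. complex_of_real (J \<alpha> \<beta>))) \<and>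
         preserves_stability (diag_op (\<lambda>\<alpha>. complex_of_real (falling_multi \<beta> \<alpha>)))"
proof
  show "preserves_stability (diag_op (\<lambda>\<alpha>. complex_of_real (J \<alpha> \<beta>)))"
    unfolding J_conv by (intro ps_prod per_var_s sc_pos)
  show "preserves_stability (diag_op (\<lambda>\<alpha>. complex_of_real (falling_multi \<beta> \<alpha>)))"
    unfolding falling_conv by (intro ps_prod per_var)
qed


end
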